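(* Let $R$ be a ring, $n\in\mathbb{N}$, and suppose $a\in R$ can be written $a=e+v$ with $e^2=e$, $v$ a unit of $R$, $v^n=1$ and $ev=ve$. Then $(a^n-1)((a-1)^n-1)=0$.
   Context: All rings are associative with identity. *)

theory Defs
  imports Main
begin

end

theory Submission
  imports Defs
begin

lemma comm_pow:
  fixes e y :: "'a :: ring_1"
  assumes "e * y = y * e"
  shows "e * y ^ n = y ^ n * e"
proof (induction n)
  case 0 then show ?case by simp
next
  case (Suc n)
  have "e * y ^ Suc n = (e * y) * y ^ n" by (simp add: mult.assoc)
  also have "\<dots> = y * (e * y ^ n)" using assms by (simp add: mult.assoc)
  also have "\<dots> = y ^ Suc n * e" using Suc by (simp add: mult.assoc)
  finally show ?case .
qed

lemma idem_pow:
  fixes e x :: "'a :: ring_1"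
  assumes ee: "e * e = e" and c: "e * x = x * e"
  shows "(e + x) ^ n = x ^ n + e * ((1 + x) ^ n - x ^ n)"
proof (induction n)
  case 0 then show ?case by simp
next
  case (Suc n)
  let ?p = "(1 + x) ^ n"
  have "(e + x) ^ Suc n = (e + x) * (x ^ n + e * (?p - x ^ n))" using Suc by simp
  also have "\<dots> = e * x ^ n + (e * e) * (?p - x ^ n) + x * x ^ n + (x * e) * (?p - x ^ n)"
    by (simp add: algebra_simps)
  also have "\<dots> = e * x ^ n + e * (?p - x ^ n) + x * x ^ n + (e * x) * (?p - x ^ n)"
    using ee c by simp
  also have "\<dots> = x * x ^ n + e * (x ^ n + (?p - x ^ n) + x * (?p - x ^ n))"
    by (simp add: algebra_simps)
  also have "\<dots> = x ^ Suc n + e * ((1 + x) ^ Suc n - x ^ Suc n)"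
    by (simp add: algebra_simps)
  finally show ?case .
qed

theorem lemma2p1:
  fixes a e v :: "'a :: ring_1" and n :: nat
  assumes "a = e + v"
    and "e * e = e"
    and "\<exists>w. v * w = 1 \<and> w * v = 1"
    and "v ^ n = 1"
    and "e * v = v * e"
  shows "(a ^ n - 1) * ((a - 1) ^ n - 1) = 0"
proof -
  have c1: "e * (v - 1) = (v - 1) * e" using assms(5) by (simp add: algebra_simps)
  have c2: "e * (1 + v) = (1 + v) * e" using assms(5) by (simp add: algebra_simps)
  have A: "a ^ n - 1 = e * ((1 + v) ^ n - 1)"
    using idem_pow[OF assms(2) assms(5), of n] assms(1,4) by (simp add: algebra_simps)
  have "(a - 1) ^ n = (e + (v - 1)) ^ n" using assms(1) by (simp add: algebra_simps)
  also have "\<dots> = (v - 1) ^ n + e * ((1 + (v - 1)) ^ n - (v - 1) ^ n)"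
    by (rule idem_pow[OF assms(2) c1])
  finally have B0: "(a - 1) ^ n = (v - 1) ^ n + e * (1 - (v - 1) ^ n)" using assms(4) by simp
  have B: "(a - 1) ^ n - 1 = (1 - e) * ((v - 1) ^ n - 1)"
    using B0 by (simp add: algebra_simps)
  have P: "e * ((1 + v) ^ n - 1) = ((1 + v) ^ n - 1) * e"
    using comm_pow[OF c2, of n] by (simp add: algebra_simps)
  have "(a ^ n - 1) * ((a - 1) ^ n - 1)
      = e * (((1 + v) ^ n - 1) * (1 - e)) * ((v - 1) ^ n - 1)"
    using A B by (simp add: mult.assoc)
  also have "((1 + v) ^ n - 1) * (1 - e) = (1 - e) * ((1 + v) ^ n - 1)"
    using P by (simp add: algebra_simps)
  also have "e * ((1 - e) * ((1 + v) ^ n - 1)) = (e - e * e) * ((1 + v) ^ n - 1)"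
    by (simp add: algebra_simps)
  finally show ?thesis using assms(2) by simp
qed

end
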